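(* Let $T$ be an aperiodic invertible measure-preserving transformation of a standard probability space $(X,\mu)$, let $U$ be the unitary operator on $L^2(X,\mu)$ given by $Uf=f\circ T$, and let $\{n_k\}$ be any sequence of positive integers with $n_k\to\infty$. Then $U^{n_k}$ does not converge to the identity $I$ in operator norm, and the Ces\`aro averages $\frac1k\sum_{i=1}^k U^{n_i}$ do not converge to $I$ in operator norm.
   Context: $T$ is aperiodic if the set of periodic points of $T$ has measure zero. *)

theory Defs
  imports "HOL-Probability.Probability"
begin

definition standard_prob_space :: "'a::polish_space measure \<Rightarrow> bool" where
  "standard_prob_space M \<longleftrightarrow> prob_space M \<and> sets M = sets borel"

definition invertible_mpt :: "'a measure \<Rightarrow> ('a \<Rightarrow> 'a) \<Rightarrow> bool" where
  "invertible_mpt M T \<longleftrightarrow>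
     T \<in> measurable M M \<and> bij_betw T (space M) (space M) \<and>
     the_inv_into (space M) T \<in> measurable M M \<and> distr M M T = M"

definition periodic_points :: "'a measure \<Rightarrow> ('a \<Rightarrow> 'a) \<Rightarrow> 'a set" where
  "periodic_points M T = {x \<in> space M. \<exists>n>0. (T ^^ n) x = x}"

definition aperiodic :: "'a measure \<Rightarrow> ('a \<Rightarrow> 'a) \<Rightarrow> bool" where
  "aperiodic M T \<longleftrightarrow> periodic_points M T \<in> null_sets M"

definition L2 :: "'a measure \<Rightarrow> ('a \<Rightarrow> complex) set" where
  "L2 M = {f. f \<in> borel_measurable M \<and> integrable M (\<lambda>x. (cmod (f x))\<^sup>2)}"

definition L2_norm :: "'a measure \<Rightarrow> ('a \<Rightarrow> complex) \<Rightarrow> real" where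
  "L2_norm M f = sqrt (\<integral>x. (cmod (f x))\<^sup>2 \<partial>M)"

definition L2_opnorm :: "'a measure \<Rightarrow> (('a \<Rightarrow> complex) \<Rightarrow> ('a \<Rightarrow> complex)) \<Rightarrow> real" where
  "L2_opnorm M A = (SUP f \<in> {f \<in> L2 M. L2_norm M f \<le> 1}. L2_norm M (A f))"

definition koopman :: "('a \<Rightarrow> 'a) \<Rightarrow> ('a \<Rightarrow> complex) \<Rightarrow> ('a \<Rightarrow> complex)" where
  "koopman T f = f \<circ> T"

end

theory Submission imports Defs begin

locale ergsetup =
  fixes M :: "'a::polish_space measure" and T :: "'a \<Rightarrow> 'a"
  assumes std: "standard_prob_space M" and imp: "invertible_mpt M T"
begin

lemma sets_M: "sets M = sets borel" using std unfolding standard_prob_space_def by auto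
lemma space_M: "space M = UNIV" using sets_eq_imp_space_eq[OF sets_M] by simp
lemma ps: "prob_space M" using std unfolding standard_prob_space_def by auto
lemma T_meas: "T \<in> measurable M M" using imp unfolding invertible_mpt_def by auto
lemma distr_T: "distr M M T = M" using imp unfolding invertible_mpt_def by auto

lemma Tn_meas: "(T^^j) \<in> measurable M M"
  by (induction j) (auto intro: measurable_compose[OF _ T_meas])

lemma distr_Tn: "distr M M (T^^j) = M"
proof (induction j)
  case 0 then show ?case by (simp add: distr_id2 sets_M)
next
  case (Suc j)
  have "distr M M (T^^Suc j) = distr (distr M M (T^^j)) M T"
    by (simp add: distr_distr[OF T_meas Tn_meas])
  then show ?case using Suc distr_T by (simp add: comp_def)
qed

lemma open_sets: "open A \<Longrightarrow> A \<in> sets M" using sets_M by auto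

lemma sq_comp:
  assumes g: "g \<in> borel_measurable M" and i: "integrable M (\<lambda>x. (cmod (g x))\<^sup>2)"
  shows "integrable M (\<lambda>x. (cmod (g ((T^^j) x)))\<^sup>2)"
    "(\<integral>x. (cmod (g ((T^^j) x)))\<^sup>2 \<partial>M) = (\<integral>x. (cmod (g x))\<^sup>2 \<partial>M)"
proof -
  have m: "(\<lambda>x. (cmod (g x))\<^sup>2) \<in> borel_measurable M" using g by measurable
  show "integrable M (\<lambda>x. (cmod (g ((T^^j) x)))\<^sup>2)"
    using integrable_distr_eq[OF Tn_meas m, of j] i distr_Tn by simp
  show "(\<integral>x. (cmod (g ((T^^j) x)))\<^sup>2 \<partial>M) = (\<integral>x. (cmod (g x))\<^sup>2 \<partial>M)"
    using integral_distr[OF Tn_meas m, of j] distr_Tn by simp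
qed

lemma sep_lemma:
  assumes ap: "aperiodic M T" and B: "B \<in> sets M" "B \<notin> null_sets M" and j: "j > 0"
  shows "\<exists>C\<in>sets M. C \<subseteq> B \<and> C \<notin> null_sets M \<and> (\<forall>x\<in>C. (T^^j) x \<notin> C)"
proof (rule ccontr)
  assume nC: "\<not> ?thesis"
  obtain BB :: "'a set set" where cb: "countable BB" "topological_basis BB"
    using ex_countable_basis by blast
  define D where "D = (\<lambda>(U,V). B \<inter> U \<inter> (T^^j) -` V) ` {(U,V). U \<in> BB \<and> V \<in> BB \<and> U \<inter> V = {}}"
  have cD: "countable D" unfolding D_def
    by (rule countable_image, rule countable_subset[of _ "BB \<times> BB"]) (auto simp: cb)
  have Dsets: "d \<in> sets M" if "d \<in> D" for d
  proof -
    from that obtain U V where d: "d = B \<inter> U \<inter> (T^^j) -` V" and UV: "U \<in> BB" "V \<in> BB"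
      unfolding D_def by auto
    have "U \<in> sets M" "V \<in> sets M" using UV cb(2) topological_basis_open open_sets by blast+
    moreover have "(T^^j) -` V \<inter> space M \<in> sets M" using measurable_sets[OF Tn_meas] \<open>V \<in> sets M\<close> by blast
    ultimately show ?thesis using d B(1) space_M by auto
  qed
  have good: "\<forall>x\<in>d. (T^^j) x \<notin> d" if "d \<in> D" for d
    using that unfolding D_def by fastforce
  have null: "d \<in> null_sets M" if "d \<in> D" for d
  proof (rule ccontr)
    assume "d \<notin> null_sets M"
    moreover have "d \<subseteq> B" using that unfolding D_def by auto
    ultimately show False using nC Dsets[OF that] good[OF that] by blast
  qed
  have cover: "B \<subseteq> (\<Union>D) \<union> periodic_points M T"
  proof
    fix x assume xB: "x \<in> B"
    show "x \<in> (\<Union>D) \<union> periodic_points M T"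
    proof (cases "(T^^j) x = x")
      case True then show ?thesis using j space_M unfolding periodic_points_def by auto
    next
      case False
      then obtain U' V' where UV': "open U'" "open V'" "x \<in> U'" "(T^^j) x \<in> V'" "U' \<inter> V' = {}"
        using hausdorff[of x "(T^^j) x"] by metis
      obtain U where U: "U \<in> BB" "x \<in> U" "U \<subseteq> U'" using topological_basisE[OF cb(2) UV'(1,3)] by metis
      obtain V where V: "V \<in> BB" "(T^^j) x \<in> V" "V \<subseteq> V'" using topological_basisE[OF cb(2) UV'(2,4)] by metis
      have "B \<inter> U \<inter> (T^^j) -` V \<in> D" unfolding D_def using U V UV'(5) by blast
      moreover have "x \<in> B \<inter> U \<inter> (T^^j) -` V" using xB U V by auto
      ultimately show ?thesis by blast
    qed
  qed
  have "\<Union>D \<in> null_sets M" using null_sets_UN'[OF cD, of id] null by auto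
  moreover have "periodic_points M T \<in> null_sets M" using ap unfolding aperiodic_def .
  ultimately have "(\<Union>D) \<union> periodic_points M T \<in> null_sets M" by auto
  then have "B \<in> null_sets M" using null_sets_subset cover B(1) by blast
  then show False using B(2) by blast
qed

lemma tower:
  assumes ap: "aperiodic M T"
  shows "\<exists>B\<in>sets M. B \<notin> null_sets M \<and> (\<forall>j\<in>{1..N}. \<forall>x\<in>B. (T^^j) x \<notin> B)"
proof (induction N)
  case 0
  have "UNIV \<notin> null_sets M" using prob_space.emeasure_space_1[OF ps] space_M by auto
  then show ?case using space_M sets.top[of M] by auto
next
  case (Suc N)
  then obtain B where B: "B \<in> sets M" "B \<notin> null_sets M" "\<forall>j\<in>{1..N}. \<forall>x\<in>B. (T^^j) x \<notin> B" by blast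
  obtain C where C: "C \<in> sets M" "C \<subseteq> B" "C \<notin> null_sets M" "\<forall>x\<in>C. (T^^Suc N) x \<notin> C"
    using sep_lemma[OF ap B(1,2), of "Suc N"] by auto
  have "\<forall>j\<in>{1..Suc N}. \<forall>x\<in>C. (T^^j) x \<notin> C"
  proof (intro ballI)
    fix j x assume "j \<in> {1..Suc N}" "x \<in> C"
    then show "(T^^j) x \<notin> C"
    proof (cases "j = Suc N")
      case False
      then have "j \<in> {1..N}" using \<open>j \<in> {1..Suc N}\<close> by auto
      then have "(T^^j) x \<notin> B" using B(3) \<open>x \<in> C\<close> C(2) by blast
      then show ?thesis using C(2) by blast
    qed (use C in blast)
  qed
  then show ?case using C by blast
qed

lemma sq_diff_le: "(cmod (a - b))\<^sup>2 \<le> 2 * (cmod a)\<^sup>2 + 2 * (cmod b)\<^sup>2"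
proof -
  have "cmod (a - b) \<le> cmod a + cmod b" by (rule norm_triangle_ineq4)
  then have "(cmod (a - b))\<^sup>2 \<le> (cmod a + cmod b)\<^sup>2" by (simp add: power_mono)
  also have "\<dots> \<le> 2 * (cmod a)\<^sup>2 + 2 * (cmod b)\<^sup>2"
    by (smt (verit) sum_squares_bound zero_le_power2 power2_sum power2_diff)
  finally show ?thesis .
qed

lemma bound:
  assumes g: "g \<in> L2 M" and gn: "L2_norm M g \<le> 1" and I: "finite I" and c: "cmod c \<le> 1"
  shows "integrable M (\<lambda>x. (cmod (c * (\<Sum>i\<in>I. g ((T^^m i) x)) - g x))\<^sup>2)"
    "L2_norm M (\<lambda>x. c * (\<Sum>i\<in>I. g ((T^^m i) x)) - g x) \<le> sqrt (2 * real (card I) * real (card I) + 2)"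
proof -
  have gm: "g \<in> borel_measurable M" and gi: "integrable M (\<lambda>x. (cmod (g x))\<^sup>2)"
    using g unfolding L2_def by auto
  have gint: "(\<integral>x. (cmod (g x))\<^sup>2 \<partial>M) \<le> 1"
  proof -
    have "sqrt (\<integral>x. (cmod (g x))\<^sup>2 \<partial>M) \<le> 1" using gn unfolding L2_norm_def .
    then show ?thesis by simp
  qed
  define F where "F x = 2 * real (card I) * (\<Sum>i\<in>I. (cmod (g ((T^^m i) x)))\<^sup>2) + 2 * (cmod (g x))\<^sup>2" for x
  have Fi: "integrable M F" unfolding F_def
    using sq_comp(1)[OF gm gi] gi by (auto intro!: Bochner_Integration.integrable_add integrable_mult_right Bochner_Integration.integrable_sum)
  have FI: "integral\<^sup>L M F = 2 * real (card I) * real (card I) * (\<integral>x. (cmod (g x))\<^sup>2 \<partial>M) + 2 * (\<integral>x. (cmod (g x))\<^sup>2 \<partial>M)"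
    unfolding F_def using sq_comp[OF gm gi] gi
    by (simp add: integral_add integrable_sum integral_sum)
  have pw: "(cmod (c * (\<Sum>i\<in>I. g ((T^^m i) x)) - g x))\<^sup>2 \<le> F x" for x
  proof -
    have "cmod (c * (\<Sum>i\<in>I. g ((T^^m i) x))) \<le> cmod (\<Sum>i\<in>I. g ((T^^m i) x))"
      using c by (simp add: norm_mult mult_left_le_one_le)
    also have "\<dots> \<le> (\<Sum>i\<in>I. cmod (g ((T^^m i) x)))" by (rule norm_sum)
    finally have a: "(cmod (c * (\<Sum>i\<in>I. g ((T^^m i) x))))\<^sup>2 \<le> (\<Sum>i\<in>I. cmod (g ((T^^m i) x)))\<^sup>2"
      by (simp add: power_mono)
    also have "\<dots> \<le> (\<Sum>i\<in>I. (cmod (g ((T^^m i) x)))\<^sup>2) * card I"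
      by (rule sum_squared_le_sum_of_squares)
    finally show ?thesis using sq_diff_le[of "c * (\<Sum>i\<in>I. g ((T^^m i) x))" "g x"]
      unfolding F_def by (simp add: algebra_simps)
  qed
  have hm: "(\<lambda>x. (cmod (c * (\<Sum>i\<in>I. g ((T^^m i) x)) - g x))\<^sup>2) \<in> borel_measurable M"
    using gm Tn_meas by measurable
  show hi: "integrable M (\<lambda>x. (cmod (c * (\<Sum>i\<in>I. g ((T^^m i) x)) - g x))\<^sup>2)"
    by (rule Bochner_Integration.integrable_bound[OF Fi hm]) (use pw in \<open>auto intro!: AE_I2 order_trans[OF _ abs_ge_self]\<close>)
  have "(\<integral>x. (cmod (c * (\<Sum>i\<in>I. g ((T^^m i) x)) - g x))\<^sup>2 \<partial>M) \<le> integral\<^sup>L M F"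
    by (rule integral_mono[OF hi Fi pw])
  also have "\<dots> \<le> 2 * real (card I) * real (card I) + 2"
    unfolding FI
  proof -
    have "0 \<le> 2 * real (card I) * real (card I)" by simp
    then have "2 * real (card I) * real (card I) * (\<integral>x. (cmod (g x))\<^sup>2 \<partial>M) \<le> 2 * real (card I) * real (card I)"
      using gint mult_left_le by blast
    then show "2 * real (card I) * real (card I) * (\<integral>x. (cmod (g x))\<^sup>2 \<partial>M) + 2 * (\<integral>x. (cmod (g x))\<^sup>2 \<partial>M) \<le> 2 * real (card I) * real (card I) + 2"
      using gint by linarith
  qed
  finally show "L2_norm M (\<lambda>x. c * (\<Sum>i\<in>I. g ((T^^m i) x)) - g x) \<le> sqrt (2 * real (card I) * real (card I) + 2)"
    unfolding L2_norm_def by simp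
qed

lemma testfun:
  assumes B: "B \<in> sets M" "B \<notin> null_sets M"
  defines "f \<equiv> (\<lambda>x. complex_of_real (indicator B x / sqrt (measure M B)))"
  shows "f \<in> L2 M" "L2_norm M f \<le> 1"
    "\<And>h. integrable M (\<lambda>x. (cmod (h x - f x))\<^sup>2) \<Longrightarrow> (\<forall>x\<in>B. h x = 0) \<Longrightarrow> L2_norm M (\<lambda>x. h x - f x) \<ge> 1"
proof -
  interpret prob_space M by (rule ps)
  define \<mu> where "\<mu> = measure M B"
  have mpos: "\<mu> > 0"
    using B unfolding \<mu>_def by (metis emeasure_eq_measure ennreal_0 measure_nonneg less_eq_real_def null_setsI)
  have sq: "(cmod (f x))\<^sup>2 = indicator B x / \<mu>" for x
    using mpos unfolding f_def \<mu>_def[symmetric] by (simp add: indicator_def power_divide norm_divide)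
  have ii: "integrable M (\<lambda>x. indicator B x / \<mu> :: real)"
    using B(1) by (intro integrable_divide) (simp add: emeasure_eq_measure)
  have iv: "(\<integral>x. indicator B x / \<mu> \<partial>M) = 1"
    using B(1) mpos by (simp add: \<mu>_def)
  have fm: "f \<in> borel_measurable M" unfolding f_def using B(1) by measurable
  show "f \<in> L2 M" unfolding L2_def using fm ii sq by simp
  show "L2_norm M f \<le> 1" unfolding L2_norm_def sq iv by simp
  fix h assume hi: "integrable M (\<lambda>x. (cmod (h x - f x))\<^sup>2)" and h0: "\<forall>x\<in>B. h x = 0"
  have "(indicator B x / \<mu>) \<le> (cmod (h x - f x))\<^sup>2" for x
  proof (cases "x \<in> B")
    case True then show ?thesis using h0 sq[of x] by simp
  next
    case False then show ?thesis by simp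
  qed
  then have "1 \<le> (\<integral>x. (cmod (h x - f x))\<^sup>2 \<partial>M)"
    using integral_mono[OF ii hi] iv by metis
  then show "L2_norm M (\<lambda>x. h x - f x) \<ge> 1" unfolding L2_norm_def by simp
qed

end

lemma koopman_pow: "(koopman T ^^ m) f = f \<circ> (T^^m)"
proof (induction m)
  case 0 then show ?case by simp
next
  case (Suc m)
  have "(koopman T ^^ Suc m) f = koopman T ((koopman T ^^ m) f)" by simp
  also have "\<dots> = f \<circ> (T^^m \<circ> T)" by (simp only: Suc koopman_def comp_assoc)
  also have "T^^m \<circ> T = T^^Suc m" by (simp only: funpow_Suc_right)
  finally show ?case .
qed

lemma opnorm_ge1:
  assumes "\<And>g. g \<in> L2 M \<Longrightarrow> L2_norm M g \<le> 1 \<Longrightarrow> L2_norm M (A g) \<le> K"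
    and "f \<in> L2 M" "L2_norm M f \<le> 1" "L2_norm M (A f) \<ge> 1"
  shows "L2_opnorm M A \<ge> 1"
  unfolding L2_opnorm_def
  by (rule cSUP_upper2[where x=f]) (use assms in \<open>auto intro!: bdd_aboveI2\<close>)

lemma not_to0: "(\<And>k. (1::real) \<le> X k) \<Longrightarrow> \<not> (X \<longlonglongrightarrow> 0)"
  using LIMSEQ_le_const[of X 0 1] by force

theorem mainTheorem5:
  fixes M :: "'a::polish_space measure" and T :: "'a \<Rightarrow> 'a" and n :: "nat \<Rightarrow> nat"
  assumes "standard_prob_space M"
    and "invertible_mpt M T"
    and "aperiodic M T"
    and "\<And>k. n k > 0"
    and "filterlim n at_top sequentially"
  shows "\<not> ((\<lambda>k. L2_opnorm M (\<lambda>f. (koopman T ^^ n k) f - f)) \<longlonglongrightarrow> 0) \<and>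
         \<not> ((\<lambda>k. L2_opnorm M
              (\<lambda>f. (\<lambda>x. (1 / real k) * (\<Sum>i=1..k. (koopman T ^^ n i) f x)) - f)) \<longlonglongrightarrow> 0)"
proof
  interpret ergsetup M T using assms(1,2) by unfold_locales
  show "\<not> ((\<lambda>k. L2_opnorm M (\<lambda>f. (koopman T ^^ n k) f - f)) \<longlonglongrightarrow> 0)"
  proof (rule not_to0)
    fix k
    define m where "m = n k"
    have eq: "(koopman T ^^ n k) g - g = (\<lambda>x. 1 * (\<Sum>i\<in>{1::nat}. g ((T^^(\<lambda>_. m) i) x)) - g x)" for g
      by (rule ext) (simp add: koopman_pow m_def)
    obtain B where B: "B \<in> sets M" "B \<notin> null_sets M" "\<forall>j\<in>{1..m}. \<forall>x\<in>B. (T^^j) x \<notin> B"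
      using tower[OF assms(3)] by blast
    define f where "f = (\<lambda>x. complex_of_real (indicator B x / sqrt (measure M B)))"
    have f: "f \<in> L2 M" "L2_norm M f \<le> 1"
      "\<And>h. integrable M (\<lambda>x. (cmod (h x - f x))\<^sup>2) \<Longrightarrow> (\<forall>x\<in>B. h x = 0) \<Longrightarrow> L2_norm M (\<lambda>x. h x - f x) \<ge> 1"
      using testfun[OF B(1,2)] unfolding f_def by auto
    have mpos: "m \<in> {1..m}" using assms(4)[of k] unfolding m_def by auto
    have "1 \<le> L2_norm M (\<lambda>x. 1 * (\<Sum>i\<in>{1::nat}. f ((T^^(\<lambda>_. m) i) x)) - f x)"
    proof (rule f(3))
      show "integrable M (\<lambda>x. (cmod (1 * (\<Sum>i\<in>{1::nat}. f ((T^^(\<lambda>_. m) i) x)) - f x))\<^sup>2)"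
        using bound(1)[OF f(1,2), of "{1::nat}" 1 "\<lambda>_. m"] by simp
      show "\<forall>x\<in>B. 1 * (\<Sum>i\<in>{1::nat}. f ((T^^(\<lambda>_. m) i) x)) = 0"
        using B(3) mpos unfolding f_def by (auto simp: indicator_def)
    qed
    then show "1 \<le> L2_opnorm M (\<lambda>f. (koopman T ^^ n k) f - f)"
      unfolding eq
      by (intro opnorm_ge1[OF _ f(1,2)]) (rule bound(2)[of _ "{1::nat}" 1 "\<lambda>_. m"], auto)
  qed
  show "\<not> ((\<lambda>k. L2_opnorm M
              (\<lambda>f. (\<lambda>x. (1 / real k) * (\<Sum>i=1..k. (koopman T ^^ n i) f x)) - f)) \<longlonglongrightarrow> 0)"
  proof (rule not_to0)
    fix k
    define c where "c = complex_of_real (1 / real k)"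
    have c: "cmod c \<le> 1"
    proof -
      have "cmod c = \<bar>1 / real k\<bar>" unfolding c_def by (rule norm_of_real)
      also have "\<dots> \<le> 1" by (cases k) (auto simp: divide_le_eq)
      finally show ?thesis .
    qed
    have eq: "(\<lambda>x. c * (\<Sum>i=1..k. (koopman T ^^ n i) g x)) - g = (\<lambda>x. c * (\<Sum>i\<in>{1..k}. g ((T^^n i) x)) - g x)" for g
      by (rule ext) (simp add: koopman_pow)
    define N where "N = Max (n ` {1..k})"
    obtain B where B: "B \<in> sets M" "B \<notin> null_sets M" "\<forall>j\<in>{1..N}. \<forall>x\<in>B. (T^^j) x \<notin> B"
      using tower[OF assms(3)] by blast
    define f where "f = (\<lambda>x. complex_of_real (indicator B x / sqrt (measure M B)))"
    have f: "f \<in> L2 M" "L2_norm M f \<le> 1"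
      "\<And>h. integrable M (\<lambda>x. (cmod (h x - f x))\<^sup>2) \<Longrightarrow> (\<forall>x\<in>B. h x = 0) \<Longrightarrow> L2_norm M (\<lambda>x. h x - f x) \<ge> 1"
      using testfun[OF B(1,2)] unfolding f_def by auto
    have npos: "n i \<in> {1..N}" if "i \<in> {1..k}" for i
      using assms(4)[of i] that unfolding N_def by (auto intro: Max_ge)
    have "1 \<le> L2_norm M (\<lambda>x. c * (\<Sum>i\<in>{1..k}. f ((T^^n i) x)) - f x)"
    proof (rule f(3))
      show "integrable M (\<lambda>x. (cmod (c * (\<Sum>i\<in>{1..k}. f ((T^^n i) x)) - f x))\<^sup>2)"
        using bound(1)[OF f(1,2) _ c, of "{1..k}" n] by simp
      show "\<forall>x\<in>B. c * (\<Sum>i\<in>{1..k}. f ((T^^n i) x)) = 0"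
      proof
        fix x assume x: "x \<in> B"
        have "f ((T^^n i) x) = 0" if "i \<in> {1..k}" for i
          using B(3) npos[OF that] x unfolding f_def by (auto simp: indicator_def)
        then show "c * (\<Sum>i\<in>{1..k}. f ((T^^n i) x)) = 0" by simp
      qed
    qed
    then have "1 \<le> L2_opnorm M (\<lambda>g. (\<lambda>x. c * (\<Sum>i=1..k. (koopman T ^^ n i) g x)) - g)"
      unfolding eq
      by (intro opnorm_ge1[OF _ f(1,2)]) (rule bound(2)[OF _ _ _ c, of _ "{1..k}" n], auto)
    then show "1 \<le> L2_opnorm M (\<lambda>f. (\<lambda>x. (1 / real k) * (\<Sum>i=1..k. (koopman T ^^ n i) f x)) - f)"
      unfolding c_def by simp
  qed
qed

end
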